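(* Let a regular network with adjacency matrix $A$ be given and let $\mathcal{L}$ be the lattice of all its synchrony subspaces. Every join-irreducible element $S$ of $\mathcal{L}$ is the smallest synchrony subspace containing some special Jordan subspace to the network. Consequently, the cardinality of the set of join-irreducible elements of $\mathcal{L}$ does not exceed the cardinality of the set of special Jordan subspaces to the network.
   Context: A regular network is a finite directed graph on cells $1,\dots,n$ (loops and multiple arrows allowed) in which every cell receives the same number $v$ of arrows (the valency). Its adjacency matrix $A=[a_{ij}]$ has $a_{ij}$ equal to the number of arrows cell $i$ receives from cell $j$; every row sum is $v$. $A$ acts on $\mathbb{C}^n$. A polydiagonal is a subspace of $\mathbb{C}^n$ of the form $\{x : x_i=x_j \text{ for all } (i,j)\in R\}$ for some (possibly empty) set $R$ of index pairs. A synchrony subspace is a polydiagonal invariant under $A$. The synchrony subspaces, ordered by inclusion, form a complete lattice $\mathcal{L}$: the meet is intersection and the join of $S_1,S_2$ is the smallest synchrony subspace containing $S_1+S_2$. An element $S\in\mathcal{L}$ is join-irreducible if it cannot be written as the join of two elements of $\mathcal{L}$ both different from $S$. $F=\{x_1=\cdots=x_n\}$ is the fully synchrony subspace. $P(W)$ is the smallest polydiagonal containing a subspace $W$. For an eigenvalue $\lambda$ of $A$, the generalized eigenspace is $G_\lambda=\operatorname{Ker}(A-\lambda I)^p$ for $p$ large. A Jordan chain of length $k$ for $\lambda$ is a sequence of nonzero vectors $x_1,\dots,x_k$ with $(A-\lambda I)x_1=0$ and $(A-\lambda I)x_i=x_{i-1}$ for $2\le i\le k$; a Jordan subspace is the span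 of a Jordan chain. A Jordan subspace $W$ of a generalized eigenspace $G$ is a special Jordan subspace to the network if for every Jordan subspace $U$ of $G$ with $\dim U=\dim W$ and $P(U)\subseteq P(W)$, either $P(U)=P(W)$ or $U=F$. *)

theory Defs
  imports "HOL-Analysis.Analysis"
begin

text \<open>Cells are the elements of a finite type 'n (so n = CARD('n) >= 1).
  The adjacency matrix has natural-number entries: A $ i $ j = number of arrows
  cell i receives from cell j.  Vectors live in complex ^ 'n.\<close>

definition regular_network :: "nat^'n^'n \<Rightarrow> nat \<Rightarrow> bool" where
  "regular_network A v \<longleftrightarrow> (\<forall>i. (\<Sum>j\<in>UNIV. A $ i $ j) = v)"

definition cmat :: "nat^'n^'n \<Rightarrow> complex^'n^'n" where
  "cmat A = (\<chi> i j. of_nat (A $ i $ j))"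

definition polydiagonal :: "(complex^'n) set \<Rightarrow> bool" where
  "polydiagonal S \<longleftrightarrow> (\<exists>R :: ('n \<times> 'n) set. S = {x. \<forall>(i,j)\<in>R. x $ i = x $ j})"

definition synchrony :: "nat^'n^'n \<Rightarrow> (complex^'n) set \<Rightarrow> bool" where
  "synchrony A S \<longleftrightarrow> polydiagonal S \<and> (\<forall>x\<in>S. cmat A *v x \<in> S)"

text \<open>Smallest synchrony subspace containing a set W.\<close>
definition syn_closure :: "nat^'n^'n \<Rightarrow> (complex^'n) set \<Rightarrow> (complex^'n) set" where
  "syn_closure A W = \<Inter>{T. synchrony A T \<and> W \<subseteq> T}"

text \<open>Join in the lattice: smallest synchrony subspace containing S1 + S2.\<close>
definition syn_join :: "nat^'n^'n \<Rightarrow> (complex^'n) set \<Rightarrow> (complex^'n) set \<Rightarrow> (complex^'n) set" where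
  "syn_join A S1 S2 = syn_closure A {x + y | x y. x \<in> S1 \<and> y \<in> S2}"

definition join_irreducible :: "nat^'n^'n \<Rightarrow> (complex^'n) set \<Rightarrow> bool" where
  "join_irreducible A S \<longleftrightarrow> synchrony A S \<and>
     \<not> (\<exists>S1 S2. synchrony A S1 \<and> synchrony A S2 \<and> S1 \<noteq> S \<and> S2 \<noteq> S \<and> S = syn_join A S1 S2)"

definition full_sync :: "(complex^'n) set" where
  "full_sync = {x. \<forall>i j. x $ i = x $ j}"

text \<open>Smallest polydiagonal containing W.\<close>
definition Pdiag :: "(complex^'n) set \<Rightarrow> (complex^'n) set" where
  "Pdiag W = \<Inter>{Q. polydiagonal Q \<and> W \<subseteq> Q}"

text \<open>The map A - lambda I.\<close>
definition shiftop :: "nat^'n^'n \<Rightarrow> complex \<Rightarrow> complex^'n \<Rightarrow> complex^'n" where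
  "shiftop A l x = cmat A *v x - l *s x"

definition eigenvalue :: "nat^'n^'n \<Rightarrow> complex \<Rightarrow> bool" where
  "eigenvalue A l \<longleftrightarrow> (\<exists>x. x \<noteq> 0 \<and> cmat A *v x = l *s x)"

definition gen_eigenspace :: "nat^'n^'n \<Rightarrow> complex \<Rightarrow> (complex^'n) set" where
  "gen_eigenspace A l = {x. \<exists>p. (shiftop A l ^^ p) x = 0}"

text \<open>Jordan chain x_1,...,x_k (list index 0..k-1), k >= 1.\<close>
definition jordan_chain :: "nat^'n^'n \<Rightarrow> complex \<Rightarrow> (complex^'n) list \<Rightarrow> bool" where
  "jordan_chain A l xs \<longleftrightarrow> xs \<noteq> [] \<and> (\<forall>x\<in>set xs. x \<noteq> 0) \<and>
     shiftop A l (xs ! 0) = 0 \<and>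
     (\<forall>i. 0 < i \<and> i < length xs \<longrightarrow> shiftop A l (xs ! i) = xs ! (i - 1))"

text \<open>W is a Jordan subspace of the generalized eigenspace G_l (l an eigenvalue).\<close>
definition jordan_subspace :: "nat^'n^'n \<Rightarrow> complex \<Rightarrow> (complex^'n) set \<Rightarrow> bool" where
  "jordan_subspace A l W \<longleftrightarrow> eigenvalue A l \<and>
     (\<exists>xs. jordan_chain A l xs \<and> set xs \<subseteq> gen_eigenspace A l \<and> W = vec.span (set xs))"

definition special_jordan :: "nat^'n^'n \<Rightarrow> (complex^'n) set \<Rightarrow> bool" where
  "special_jordan A W \<longleftrightarrow> (\<exists>l. jordan_subspace A l W \<and>
     (\<forall>U. jordan_subspace A l U \<and> vec.dim U = vec.dim W \<and> Pdiag U \<subseteq> Pdiag W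
          \<longrightarrow> Pdiag U = Pdiag W \<or> U = full_sync))"

end

theory Submission
  imports Defs "HOL-Computational_Algebra.Polynomial_Factorial" "HOL-Computational_Algebra.Fundamental_Theorem_Algebra"
    "HOL-Computational_Algebra.Field_as_Ring" "HOL-Computational_Algebra.Euclidean_Algorithm"
begin


section \<open>Linearity of the shift\<close>

lemma shift_add: "shiftop A l (x + y) = shiftop A l x + shiftop A l y"
  unfolding shiftop_def by (simp add: vec.add algebra_simps)
lemma shift_scale: "shiftop A l (c *s x) = c *s shiftop A l x"
  unfolding shiftop_def by (simp add: vec.scale algebra_simps)
lemma shift_zero[simp]: "shiftop A l 0 = 0"
  unfolding shiftop_def by simp
lemma shift_diff: "shiftop A l (x - y) = shiftop A l x - shiftop A l y"
  unfolding shiftop_def by (simp add: vec.diff algebra_simps)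

lemma pow_add: "(shiftop A l ^^ m) (x + y) = (shiftop A l ^^ m) x + (shiftop A l ^^ m) y"
  by (induction m) (auto simp: shift_add)
lemma pow_scale: "(shiftop A l ^^ m) (c *s x) = c *s (shiftop A l ^^ m) x"
  by (induction m) (auto simp: shift_scale)
lemma pow_zero[simp]: "(shiftop A l ^^ m) 0 = 0"
  by (induction m) auto
lemma pow_diff: "(shiftop A l ^^ m) (x - y) = (shiftop A l ^^ m) x - (shiftop A l ^^ m) y"
  by (induction m) (auto simp: shift_diff)

lemma pow_sum: "(shiftop A l ^^ m) (\<Sum>i\<in>I. g i) = (\<Sum>i\<in>I. (shiftop A l ^^ m) (g i))"
  by (induction I rule: infinite_finite_induct) (auto simp: pow_add)

lemma lin_pow: "Vector_Spaces.linear (*s) (*s) (shiftop A l ^^ m)"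
  by unfold_locales (auto simp: pow_add pow_scale)
lemma lin_shift: "Vector_Spaces.linear (*s) (*s) (shiftop A l)"
  by unfold_locales (auto simp: shift_add shift_scale)

section \<open>Polydiagonals\<close>

definition pairs :: "(complex^'n) set \<Rightarrow> ('n \<times> 'n) set" where
  "pairs Q = {(i,j). \<forall>y\<in>Q. y$i = y$j}"

lemma polydiag_iff: "polydiagonal Q \<longleftrightarrow> Q = {x. \<forall>(i,j)\<in>pairs Q. x$i = x$j}"
proof
  assume "polydiagonal Q"
  then obtain R where R: "Q = {x. \<forall>(i,j)\<in>R. x $ i = x $ j}" unfolding polydiagonal_def by blast
  have "R \<subseteq> pairs Q" unfolding pairs_def R by auto
  then show "Q = {x. \<forall>(i,j)\<in>pairs Q. x$i = x$j}"
    unfolding pairs_def using R by blast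
next
  assume "Q = {x. \<forall>(i,j)\<in>pairs Q. x$i = x$j}"
  then show "polydiagonal Q" unfolding polydiagonal_def by blast
qed

lemma polydiag_Inter:
  fixes F :: "(complex^'n) set set"
  assumes "\<forall>Q\<in>F. polydiagonal Q"
  shows "polydiagonal (\<Inter>F)"
proof -
  have "\<Inter>F = {x::complex^'n. \<forall>(i,j)\<in>pairs (\<Inter>F). x$i = x$j}"
  proof
    show "\<Inter>F \<subseteq> {x::complex^'n. \<forall>(i,j)\<in>pairs (\<Inter>F). x$i = x$j}" unfolding pairs_def by auto
    show "{x::complex^'n. \<forall>(i,j)\<in>pairs (\<Inter>F). x$i = x$j} \<subseteq> \<Inter>F"
    proof
      fix x assume x: "x \<in> {x::complex^'n. \<forall>(i,j)\<in>pairs (\<Inter>F). x$i = x$j}"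
      show "x \<in> \<Inter>F"
      proof
        fix Q assume Q: "Q \<in> F"
        have "pairs Q \<subseteq> pairs (\<Inter>F)" using Q unfolding pairs_def by auto
        then have "x \<in> {x::complex^'n. \<forall>(i,j)\<in>pairs Q. x$i = x$j}" using x by auto
        then show "x \<in> Q" using assms Q polydiag_iff by blast
      qed
    qed
  qed
  then show ?thesis unfolding polydiagonal_def by blast
qed

lemma polydiag_Int: "polydiagonal P \<Longrightarrow> polydiagonal Q \<Longrightarrow> polydiagonal (P \<inter> Q)"
  using polydiag_Inter[of "{P,Q}"] by auto

lemma polydiag_pair: "polydiagonal {x::complex^'n. x$i = x$j}"
  unfolding polydiagonal_def by (rule exI[of _ "{(i,j)}"]) auto

lemma polydiag_UNIV: "polydiagonal (UNIV :: (complex^'n) set)"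
  unfolding polydiagonal_def by (rule exI[of _ "{}"]) auto

lemma polydiag_subspace: "polydiagonal Q \<Longrightarrow> vec.subspace Q"
  unfolding polydiagonal_def vec.subspace_def by (auto simp: case_prod_beta) (metis fst_conv snd_conv)+

lemma polydiag_full: "polydiagonal full_sync"
  unfolding polydiagonal_def full_sync_def by (rule exI[of _ UNIV]) auto

lemma full_sub_polydiag: "polydiagonal Q \<Longrightarrow> full_sync \<subseteq> Q"
  unfolding polydiagonal_def full_sync_def by auto

lemma Pdiag_poly: "polydiagonal (Pdiag W)"
  unfolding Pdiag_def by (rule polydiag_Inter) auto
lemma Pdiag_sup: "W \<subseteq> Pdiag W"
  unfolding Pdiag_def by auto
lemma Pdiag_least: "polydiagonal Q \<Longrightarrow> W \<subseteq> Q \<Longrightarrow> Pdiag W \<subseteq> Q"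
  unfolding Pdiag_def by auto
lemma Pdiag_subspace: "vec.subspace (Pdiag W)"
  using Pdiag_poly polydiag_subspace by blast

lemma Pdiag_dim_less:
  assumes "Pdiag X \<subset> Pdiag Y" shows "vec.dim (Pdiag X) < vec.dim (Pdiag Y)"
proof -
  have e: "vec.span (Pdiag X) = Pdiag X" "vec.span (Pdiag Y) = Pdiag Y"
    using Pdiag_subspace vec.span_eq_iff by blast+
  have "vec.span (Pdiag X) \<subset> vec.span (Pdiag Y)" unfolding e by (rule assms)
  then show ?thesis by (rule vec.dim_psubset)
qed

section \<open>Synchrony and closure\<close>

lemma sync_subspace: "synchrony A T \<Longrightarrow> vec.subspace T"
  unfolding synchrony_def using polydiag_subspace by blast
lemma sync_M: "synchrony A T \<Longrightarrow> x \<in> T \<Longrightarrow> cmat A *v x \<in> T"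
  unfolding synchrony_def by blast
lemma sync_shift: "synchrony A T \<Longrightarrow> x \<in> T \<Longrightarrow> shiftop A l x \<in> T"
  unfolding shiftop_def using sync_M sync_subspace
  by (metis vec.subspace_diff vec.subspace_scale)
lemma sync_pow: "synchrony A T \<Longrightarrow> x \<in> T \<Longrightarrow> (shiftop A l ^^ m) x \<in> T"
  by (induction m) (auto simp: sync_shift)

lemma sync_Inter: "\<forall>T\<in>F. synchrony A T \<Longrightarrow> synchrony A (\<Inter>F)"
  unfolding synchrony_def using polydiag_Inter by blast

lemma sync_UNIV: "synchrony A UNIV"
  unfolding synchrony_def using polydiag_UNIV by auto

lemma sc_sync: "synchrony A (syn_closure A W)"
  unfolding syn_closure_def by (rule sync_Inter) auto
lemma sc_sup: "W \<subseteq> syn_closure A W"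
  unfolding syn_closure_def by auto
lemma sc_least: "synchrony A T \<Longrightarrow> W \<subseteq> T \<Longrightarrow> syn_closure A W \<subseteq> T"
  unfolding syn_closure_def by auto
lemma sc_mono: "W \<subseteq> W' \<Longrightarrow> syn_closure A W \<subseteq> syn_closure A W'"
  unfolding syn_closure_def by auto
lemma sc_idem: "synchrony A T \<Longrightarrow> syn_closure A T = T"
  using sc_least sc_sup by blast
lemma sc_subspace: "vec.subspace (syn_closure A W)"
  using sc_sync sync_subspace by blast

definition one :: "complex^'n" where "one = (\<chi> i. 1)"

lemma one_nz: "one \<noteq> 0"
  unfolding one_def by (metis vec_lambda_beta zero_index zero_neq_one)

lemma A_one: assumes "regular_network A v" shows "cmat A *v (c *s one) = (of_nat v * c) *s one"
proof -
  have "\<And>i. (\<Sum>j\<in>UNIV. c * of_nat (A$i$j)) = c * of_nat v"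
  proof -
    fix i
    have sv: "(\<Sum>j\<in>UNIV. A$i$j) = v" using assms unfolding regular_network_def by blast
    have "(\<Sum>j\<in>UNIV. c * of_nat (A$i$j)) = c * (\<Sum>j\<in>UNIV. of_nat (A$i$j))" by (rule sum_distrib_left[symmetric])
    also have "\<dots> = c * of_nat (\<Sum>j\<in>UNIV. A$i$j)" by (simp only: of_nat_sum)
    also have "\<dots> = c * of_nat v" by (simp only: sv)
    finally show "(\<Sum>j\<in>UNIV. c * of_nat (A$i$j)) = c * of_nat v" .
  qed
  then show ?thesis
    unfolding cmat_def one_def matrix_vector_mult_def by (simp add: vec_eq_iff mult.commute)
qed

lemma full_sync_eq: "x \<in> full_sync \<longleftrightarrow> (\<exists>c. x = c *s one)"
proof
  assume "x \<in> full_sync"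
  then have "x = (x $ i0) *s one" for i0 unfolding full_sync_def one_def by (simp add: vec_eq_iff)
  then show "\<exists>c. x = c *s one" by blast
next
  assume "\<exists>c. x = c *s one"
  then show "x \<in> full_sync" unfolding full_sync_def one_def by auto
qed

lemma sync_full: fixes A :: "nat^'n^'n" assumes "regular_network A v" shows "synchrony A full_sync"
  unfolding synchrony_def
proof (intro conjI ballI)
  show "polydiagonal full_sync" by (rule polydiag_full)
  fix x :: "complex^'n" assume "x \<in> full_sync"
  then obtain c where "x = c *s one" using full_sync_eq by blast
  then have "cmat A *v x = (of_nat v * c) *s one" using A_one[OF assms] by simp
  then show "cmat A *v x \<in> full_sync" using full_sync_eq by blast
qed

lemma full_sub_sync: "synchrony A T \<Longrightarrow> full_sync \<subseteq> T"
  unfolding synchrony_def using full_sub_polydiag by blast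

lemma full_sub_sc: "full_sync \<subseteq> syn_closure A W"
  using full_sub_sync sc_sync by blast

lemma sc_empty: "regular_network A v \<Longrightarrow> syn_closure A {} = full_sync"
  using sc_least[OF sync_full, of A v "{}"] full_sub_sc by blast

lemma sc_zero: "regular_network A v \<Longrightarrow> syn_closure A {0} = full_sync"
proof -
  assume r: "regular_network A v"
  have "0 \<in> full_sync" unfolding full_sync_def by simp
  then show ?thesis using sc_least[OF sync_full[OF r], of "{0}"] full_sub_sc by blast
qed

lemma ji_split:
  assumes "join_irreducible A S" "synchrony A S1" "synchrony A S2" "S = syn_join A S1 S2"
  shows "S1 = S \<or> S2 = S"
  using assms unfolding join_irreducible_def by blast

lemma join_sub:
  assumes "synchrony A S" "S1 \<subseteq> S" "S2 \<subseteq> S"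
  shows "syn_join A S1 S2 \<subseteq> S"
  unfolding syn_join_def
proof (rule sc_least[OF assms(1)])
  show "{x + y |x y. x \<in> S1 \<and> y \<in> S2} \<subseteq> S"
    using assms sync_subspace vec.subspace_add by blast
qed

lemma join_mem: assumes "x \<in> S1" "y \<in> S2" shows "x + y \<in> syn_join A S1 S2"
proof -
  have "x + y \<in> {x + y |x y. x \<in> S1 \<and> y \<in> S2}" using assms by blast
  then show ?thesis unfolding syn_join_def by (meson sc_sup subsetD)
qed

lemma join_sync: "synchrony A (syn_join A S1 S2)"
  unfolding syn_join_def by (rule sc_sync)

section \<open>Jordan chains\<close>

lemma chain_nth:
  assumes "jordan_chain A l xs" "i < length xs"
  shows "(shiftop A l ^^ j) (xs!i) = (if j \<le> i then xs!(i-j) else 0)"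
proof (induction j)
  case 0 then show ?case by simp
next
  case (Suc j)
  show ?case
  proof (cases "j \<le> i")
    case True
    then have "(shiftop A l ^^ Suc j) (xs!i) = shiftop A l (xs!(i-j))" using Suc by simp
    also have "\<dots> = (if Suc j \<le> i then xs!(i - Suc j) else 0)"
    proof (cases "i - j = 0")
      case True
      then show ?thesis using assms \<open>j \<le> i\<close> unfolding jordan_chain_def by auto
    next
      case False
      then have "shiftop A l (xs!(i-j)) = xs!(i-j-1)"
        using assms unfolding jordan_chain_def by auto
      then show ?thesis using False by (simp add: Suc_le_eq)
    qed
    finally show ?thesis .
  next
    case False
    then show ?thesis using Suc by simp
  qed
qed

lemma chain_ne: "jordan_chain A l xs \<Longrightarrow> 0 < length xs"
  unfolding jordan_chain_def by auto

lemma chain_nz: "jordan_chain A l xs \<Longrightarrow> i < length xs \<Longrightarrow> xs!i \<noteq> 0"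
  unfolding jordan_chain_def by auto

lemma chain_distinct:
  assumes c: "jordan_chain A l xs" shows "distinct xs"
  unfolding distinct_conv_nth
proof (intro allI impI)
  fix i j assume ij: "i < length xs" "j < length xs" "i \<noteq> j"
  show "xs!i \<noteq> xs!j"
  proof
    assume eq: "xs!i = xs!j"
    { fix a b assume ab: "a < b" "b < length xs" "xs!a = xs!b"
      have "(shiftop A l ^^ b) (xs!b) = xs!0" using chain_nth[OF c ab(2), of b] by simp
      moreover have "(shiftop A l ^^ b) (xs!a) = 0"
      proof -
        have "a < length xs" using ab(1,2) by simp
        from chain_nth[OF c this, of b] ab(1) show ?thesis by simp
      qed
      ultimately have "xs!0 = 0" using ab(3) by metis
      moreover have "0 < length xs" using ab by auto
      ultimately have False using chain_nz[OF c, of 0] by auto }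
    then show False using ij eq by (metis linorder_neqE_nat)
  qed
qed

lemma chain_indep:
  assumes c: "jordan_chain A l xs" shows "vec.independent (set xs)"
proof
  assume "vec.dependent (set xs)"
  then obtain u where u: "\<exists>v\<in>set xs. u v \<noteq> 0" "(\<Sum>v\<in>set xs. u v *s v) = 0"
    using vec.dependent_finite[of "set xs"] by auto
  have d: "distinct xs" using chain_distinct[OF c] .
  let ?k = "length xs"
  have "(\<Sum>v\<in>set xs. u v *s v) = sum_list (map (\<lambda>v. u v *s v) xs)"
    using d by (rule sum.distinct_set_conv_list)
  also have "\<dots> = (\<Sum>i=0..<?k. u (xs!i) *s xs!i)" by (simp add: sum_list_sum_nth)
  also have "\<dots> = (\<Sum>i<?k. u (xs!i) *s xs!i)" by (simp add: atLeast0LessThan)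
  finally have s: "(\<Sum>i<?k. u (xs!i) *s xs!i) = 0" using u(2) by simp
  define I where "I = {i. i < ?k \<and> u (xs!i) \<noteq> 0}"
  have "I \<noteq> {}" using u(1) unfolding I_def by (auto simp: in_set_conv_nth)
  have fI: "finite I" unfolding I_def by auto
  define m where "m = Max I"
  have mI: "m \<in> I" using \<open>I \<noteq> {}\<close> fI m_def Max_in by blast
  have mmax: "\<And>i. i \<in> I \<Longrightarrow> i \<le> m" using fI m_def by auto
  have "(shiftop A l ^^ m) (\<Sum>i<?k. u (xs!i) *s xs!i) = (\<Sum>i<?k. u (xs!i) *s (shiftop A l ^^ m) (xs!i))"
    by (simp add: pow_sum pow_scale)
  also have "\<dots> = (\<Sum>i<?k. if i = m then u (xs!m) *s xs!0 else 0)"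
  proof (rule sum.cong)
    fix i assume i: "i \<in> {..<?k}"
    show "u (xs!i) *s (shiftop A l ^^ m) (xs!i) = (if i = m then u (xs!m) *s xs!0 else 0)"
    proof (cases "i < m")
      case True then show ?thesis using chain_nth[OF c, of i m] i by auto
    next
      case False
      show ?thesis
      proof (cases "i = m")
        case True then show ?thesis using chain_nth[OF c, of i m] i by auto
      next
        case False
        have "i \<notin> I"
        proof
          assume "i \<in> I" then have "i \<le> m" by (rule mmax)
          with \<open>\<not> i < m\<close> False show False by simp
        qed
        then have "u (xs!i) = 0" using i unfolding I_def by auto
        then show ?thesis using False by simp
      qed
    qed
  qed simp
  also have "\<dots> = u (xs!m) *s xs!0" using mI unfolding I_def by simp
  finally have "u (xs!m) *s xs!0 = 0" using s by simp
  then show False using mI chain_nz[OF c, of 0] chain_ne[OF c] unfolding I_def by auto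
qed

lemma chain_dim: "jordan_chain A l xs \<Longrightarrow> vec.dim (vec.span (set xs)) = length xs"
  using chain_indep chain_distinct vec.dim_eq_card_independent distinct_card
  by (metis vec.dim_span)



section \<open>Chains from generalized eigenvectors\<close>

lemma chain_from_gen:
  assumes nz: "y \<noteq> 0" and k: "(shiftop A l ^^ k) y = 0"
  shows "\<exists>zs. jordan_chain A l zs \<and> set zs \<subseteq> gen_eigenspace A l \<and> y \<in> set zs \<and>
           (\<forall>z\<in>set zs. \<exists>m. z = (shiftop A l ^^ m) y)"
proof -
  let ?f = "shiftop A l"
  define h where "h = (LEAST h. (?f ^^ h) y = 0)"
  have hz: "(?f ^^ h) y = 0" unfolding h_def using k by (rule LeastI)
  have hnz: "\<And>m. m < h \<Longrightarrow> (?f ^^ m) y \<noteq> 0" unfolding h_def using not_less_Least by blast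
  have h0: "h > 0" using hz nz by (cases h) auto
  define zs where "zs = map (\<lambda>i. (?f ^^ (h - 1 - i)) y) [0..<h]"
  have len: "length zs = h" unfolding zs_def by simp
  have nth: "\<And>i. i < h \<Longrightarrow> zs!i = (?f ^^ (h - 1 - i)) y" unfolding zs_def by simp
  have "jordan_chain A l zs"
    unfolding jordan_chain_def
  proof (intro conjI allI impI ballI)
    show "zs \<noteq> []" using len h0 by auto
    fix x assume "x \<in> set zs"
    then obtain i where "i < h" "x = zs!i" using len by (auto simp: in_set_conv_nth)
    then show "x \<noteq> 0" using nth hnz by auto
  next
    have "?f (zs!0) = ?f ((?f ^^ (h - 1)) y)" using nth h0 by simp
    also have "\<dots> = (?f ^^ Suc (h - 1)) y" by simp
    also have "\<dots> = 0" using h0 hz by simp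
    finally show "?f (zs!0) = 0" .
  next
    fix i assume i: "0 < i \<and> i < length zs"
    have "?f (zs!i) = ?f ((?f ^^ (h - 1 - i)) y)" using nth i len by simp
    also have "\<dots> = (?f ^^ Suc (h - 1 - i)) y" by simp
    also have "Suc (h - 1 - i) = h - 1 - (i - 1)" using i len by linarith
    also have "(?f ^^ (h - 1 - (i - 1))) y = zs!(i-1)" using nth[of "i-1"] i len by (metis less_imp_diff_less)
    finally show "?f (zs!i) = zs!(i-1)" .
  qed
  moreover have "set zs \<subseteq> gen_eigenspace A l"
  proof
    fix z assume "z \<in> set zs"
    then obtain i where i: "i < h" "z = (?f ^^ (h - 1 - i)) y" using len nth by (auto simp: in_set_conv_nth)
    have "(?f ^^ h) z = (?f ^^ (h + (h - 1 - i))) y" using i by (simp only: funpow_add comp_apply)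
    also have "\<dots> = (?f ^^ ((h - 1 - i) + h)) y" by (rule arg_cong[where f="\<lambda>n. (?f ^^ n) y"]) simp
    also have "\<dots> = (?f ^^ (h - 1 - i)) ((?f ^^ h) y)" by (simp only: funpow_add comp_apply)
    also have "\<dots> = 0" using hz by simp
    finally show "z \<in> gen_eigenspace A l" unfolding gen_eigenspace_def by blast
  qed
  moreover have "y \<in> set zs"
  proof -
    have "zs!(h-1) = y" using nth h0 by simp
    then show ?thesis using len h0 by (metis diff_less nth_mem zero_less_one)
  qed
  moreover have "\<forall>z\<in>set zs. \<exists>m. z = (?f ^^ m) y"
  proof
    fix z assume "z \<in> set zs"
    then obtain i where "i < h" "z = zs!i" using len by (auto simp: in_set_conv_nth)
    then show "\<exists>m. z = (?f ^^ m) y" using nth by blast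
  qed
  ultimately show ?thesis by blast
qed

lemma chain_eigenvalue: "jordan_chain A l zs \<Longrightarrow> eigenvalue A l"
  unfolding jordan_chain_def eigenvalue_def shiftop_def
  by (metis eq_iff_diff_eq_0 length_greater_0_conv nth_mem)

lemma span_sub_sync:
  assumes "synchrony A T" "y \<in> T" "\<forall>z\<in>set zs. \<exists>m. z = (shiftop A l ^^ m) y"
  shows "vec.span (set zs) \<subseteq> T"
  using assms sync_pow sync_subspace vec.span_minimal by (metis subsetI)

lemma gen_generator:
  assumes nz: "y \<noteq> 0" and k: "(shiftop A l ^^ k) y = 0"
  shows "\<exists>W. jordan_subspace A l W \<and> syn_closure A W = syn_closure A {y}"
proof -
  obtain zs where zs: "jordan_chain A l zs" "set zs \<subseteq> gen_eigenspace A l" "y \<in> set zs"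
    "\<forall>z\<in>set zs. \<exists>m. z = (shiftop A l ^^ m) y"
    using chain_from_gen[OF assms] by blast
  let ?W = "vec.span (set zs)"
  have "jordan_subspace A l ?W"
    unfolding jordan_subspace_def using zs chain_eigenvalue by blast
  moreover have "syn_closure A ?W = syn_closure A {y}"
  proof
    have "?W \<subseteq> syn_closure A {y}"
      using span_sub_sync[OF sc_sync _ zs(4)] sc_sup by blast
    then show "syn_closure A ?W \<subseteq> syn_closure A {y}" using sc_least sc_sync by blast
    have "{y} \<subseteq> ?W" using zs(3) vec.span_base by blast
    then show "syn_closure A {y} \<subseteq> syn_closure A ?W" by (rule sc_mono)
  qed
  ultimately show ?thesis by blast
qed



section \<open>Polynomials applied to the adjacency matrix\<close>

definition Mf :: "nat^'n^'n \<Rightarrow> complex^'n \<Rightarrow> complex^'n" where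
  "Mf A x = cmat A *v x"

definition pA :: "nat^'n^'n \<Rightarrow> complex poly \<Rightarrow> complex^'n \<Rightarrow> complex^'n" where
  "pA A p x = (\<Sum>i<Suc (degree p). coeff p i *s (Mf A ^^ i) x)"

lemma Mf_add: "Mf A (x + y) = Mf A x + Mf A y" unfolding Mf_def by (simp add: vec.add)
lemma Mf_scale: "Mf A (c *s x) = c *s Mf A x" unfolding Mf_def by (simp add: vec.scale)
lemma Mf_zero[simp]: "Mf A 0 = 0" unfolding Mf_def by simp
lemma Mf_sum: "Mf A (\<Sum>i\<in>I. g i) = (\<Sum>i\<in>I. Mf A (g i))"
  by (induction I rule: infinite_finite_induct) (auto simp: Mf_add)
lemma Mfp_add: "(Mf A ^^ m) (x + y) = (Mf A ^^ m) x + (Mf A ^^ m) y"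
  by (induction m) (auto simp: Mf_add)
lemma Mfp_scale: "(Mf A ^^ m) (c *s x) = c *s (Mf A ^^ m) x"
  by (induction m) (auto simp: Mf_scale)

lemma pA_gen: assumes "degree p < n" shows "pA A p x = (\<Sum>i<n. coeff p i *s (Mf A ^^ i) x)"
  unfolding pA_def
proof (rule sum.mono_neutral_left)
  show "{..<Suc (degree p)} \<subseteq> {..<n}" using assms by auto
  show "\<forall>i\<in>{..<n} - {..<Suc (degree p)}. coeff p i *s (Mf A ^^ i) x = 0"
    by (auto simp: coeff_eq_0)
qed simp

lemma pA_add: "pA A (p + q) x = pA A p x + pA A q x"
proof -
  obtain n where n: "n = Suc (max (degree p) (degree q))" by blast
  have "degree (p + q) < n" using degree_add_le_max[of p q] n by simp
  then have "pA A (p + q) x = (\<Sum>i<n. coeff (p + q) i *s (Mf A ^^ i) x)" by (rule pA_gen)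
  also have "\<dots> = (\<Sum>i<n. coeff p i *s (Mf A ^^ i) x + coeff q i *s (Mf A ^^ i) x)"
    by (simp only: coeff_add vector_sadd_rdistrib)
  also have "\<dots> = (\<Sum>i<n. coeff p i *s (Mf A ^^ i) x) + (\<Sum>i<n. coeff q i *s (Mf A ^^ i) x)"
    by (rule sum.distrib)
  also have "\<dots> = pA A p x + pA A q x"
  proof -
    have dp: "degree p < n" and dq: "degree q < n" using n by auto
    show ?thesis by (simp only: pA_gen[OF dp] pA_gen[OF dq])
  qed
  finally show ?thesis .
qed

lemma pA_smult: "pA A (smult c p) x = c *s pA A p x"
proof -
  let ?n = "Suc (degree p)"
  have "degree (smult c p) < ?n" using degree_smult_le[of c p] by simp
  then have "pA A (smult c p) x = (\<Sum>i<?n. coeff (smult c p) i *s (Mf A ^^ i) x)" by (rule pA_gen)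
  also have "\<dots> = c *s (\<Sum>i<?n. coeff p i *s (Mf A ^^ i) x)"
    by (simp add: vec.scale_sum_right)
  finally show ?thesis unfolding pA_def .
qed

lemma pA_zero_poly[simp]: "pA A 0 x = 0"
  unfolding pA_def by simp

lemma pA_const: "pA A [:c:] x = c *s x"
  unfolding pA_def by simp

lemma pA_one: "pA A 1 x = x"
  using pA_const[of A 1 x] by (simp add: one_pCons)

lemma pA_pCons0: "pA A (pCons 0 p) x = Mf A (pA A p x)"
proof -
  let ?m = "Suc (degree p)"
  have "degree (pCons 0 p) < Suc ?m" by (simp add: degree_pCons_le le_imp_less_Suc)
  then have "pA A (pCons 0 p) x = (\<Sum>i<Suc ?m. coeff (pCons 0 p) i *s (Mf A ^^ i) x)" by (rule pA_gen)
  also have "\<dots> = (\<Sum>i<?m. coeff p i *s (Mf A ^^ Suc i) x)"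
    by (subst sum.lessThan_Suc_shift) simp
  also have "\<dots> = Mf A (\<Sum>i<?m. coeff p i *s (Mf A ^^ i) x)"
    by (simp add: Mf_sum Mf_scale del: sum.lessThan_Suc)
  finally show ?thesis unfolding pA_def .
qed

lemma pA_pCons: "pA A (pCons a p) x = a *s x + Mf A (pA A p x)"
proof -
  have "pCons a p = [:a:] + pCons 0 p" by simp
  then show ?thesis using pA_add pA_const pA_pCons0 by metis
qed

lemma pA_vadd: "pA A p (x + y) = pA A p x + pA A p y"
  unfolding pA_def by (simp add: Mfp_add vec.scale_right_distrib sum.distrib)
lemma pA_vscale: "pA A p (c *s x) = c *s pA A p x"
  unfolding pA_def by (simp add: Mfp_scale vec.scale_sum_right algebra_simps)
lemma pA_vzero[simp]: "pA A p 0 = 0"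
  using pA_vscale[of A p 0 0] by simp

lemma pA_mult: "pA A (p * q) x = pA A p (pA A q x)"
proof (induction p)
  case 0 then show ?case by simp
next
  case (pCons a p)
  have "pA A (pCons a p * q) x = pA A (smult a q + pCons 0 (p * q)) x" by simp
  also have "\<dots> = a *s pA A q x + Mf A (pA A p (pA A q x))"
    by (simp add: pA_add pA_smult pA_pCons0 pCons.IH)
  also have "\<dots> = pA A (pCons a p) (pA A q x)" by (simp add: pA_pCons)
  finally show ?case .
qed

lemma pA_diff: "pA A (p - q) x = pA A p x - pA A q x"
  using pA_add[of A "p - q" q x] by (simp add: algebra_simps)

lemma pA_monom: "pA A (monom c i) x = c *s (Mf A ^^ i) x"
proof (induction i)
  case 0 then show ?case by (simp add: monom_0 pA_const)
next
  case (Suc i)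
  then show ?case by (simp add: monom_Suc pA_pCons0 Mf_scale)
qed

lemma pA_sum_poly: "pA A (\<Sum>i\<in>I. g i) x = (\<Sum>i\<in>I. pA A (g i) x)"
  by (induction I rule: infinite_finite_induct) (auto simp: pA_add)

lemma pA_lin: "pA A [:-a, 1:] x = shiftop A a x"
  by (simp add: pA_pCons pA_const shiftop_def Mf_def)

lemma pA_linpow: "pA A ([:-a, 1:] ^ e) x = (shiftop A a ^^ e) x"
proof (induction e)
  case 0 then show ?case by (simp add: pA_one)
next
  case (Suc e)
  have "pA A ([:-a, 1:] ^ Suc e) x = pA A [:-a, 1:] (pA A ([:-a, 1:] ^ e) x)"
    by (simp only: power_Suc pA_mult)
  then show ?case using Suc by (simp add: pA_lin)
qed

lemma sync_Mfp: "synchrony A T \<Longrightarrow> x \<in> T \<Longrightarrow> (Mf A ^^ i) x \<in> T"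
  by (induction i) (auto simp: Mf_def sync_M)

lemma sync_pA: assumes "synchrony A T" "x \<in> T" shows "pA A p x \<in> T"
proof -
  have sub: "vec.subspace T" using assms(1) by (rule sync_subspace)
  show ?thesis unfolding pA_def
  proof (rule vec.subspace_sum[OF sub])
    fix i show "coeff p i *s (Mf A ^^ i) x \<in> T"
      by (rule vec.subspace_scale[OF sub]) (rule sync_Mfp[OF assms])
  qed
qed

section \<open>Annihilating polynomials\<close>

lemma span_coeffs:
  fixes m :: nat and g :: "nat \<Rightarrow> complex^'n"
  shows "y \<in> vec.span (g ` {..<m}) \<Longrightarrow> \<exists>c. y = (\<Sum>i<m. c i *s g i)"
proof (induction m arbitrary: y)
  case 0 then show ?case by simp
next
  case (Suc m)
  have "g ` {..<Suc m} = insert (g m) (g ` {..<m})" by (simp add: lessThan_Suc)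
  then have "y \<in> vec.span (insert (g m) (g ` {..<m}))" using Suc.prems by simp
  then obtain k where k: "y - k *s g m \<in> vec.span (g ` {..<m})"
    unfolding vec.span_insert by blast
  then obtain c where c: "y - k *s g m = (\<Sum>i<m. c i *s g i)" using Suc.IH by blast
  define c' where "c' i = (if i = m then k else c i)" for i
  have "(\<Sum>i<Suc m. c' i *s g i) = (\<Sum>i<m. c i *s g i) + k *s g m"
    unfolding c'_def by (simp add: lessThan_Suc)
  then show ?case using c by (metis diff_add_cancel)
qed

lemma annihilator: fixes A :: "nat^'n^'n" and x :: "complex^'n" shows "\<exists>p. p \<noteq> 0 \<and> pA A p x = 0"
proof -
  let ?g = "\<lambda>i. (Mf A ^^ i) x"
  have "\<exists>m. ?g m \<in> vec.span (?g ` {..<m})"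
  proof (rule ccontr)
    assume no: "\<not> ?thesis"
    have ind: "vec.independent (?g ` {..<m}) \<and> card (?g ` {..<m}) = m" for m
    proof (induction m)
      case 0 then show ?case by (simp add: vec.independent_empty)
    next
      case (Suc m)
      have e: "?g ` {..<Suc m} = insert (?g m) (?g ` {..<m})" by (simp add: lessThan_Suc)
      have ns: "?g m \<notin> vec.span (?g ` {..<m})" using no by blast
      then have ni: "?g m \<notin> ?g ` {..<m}" by (meson vec.span_base)
      have i1: "vec.independent (insert (?g m) (?g ` {..<m}))"
        using vec.independent_insertI[OF ns] Suc.IH by blast
      have fin: "finite (?g ` {..<m})" by simp
      have c1: "card (insert (?g m) (?g ` {..<m})) = Suc m"
        using card_insert_disjoint[OF fin ni] Suc.IH by simp
      show ?case unfolding e using i1 c1 by blast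
    qed
    let ?B = "?g ` {..<Suc CARD('n)}"
    have "card ?B \<le> vec.dim ?B" using ind vec.independent_bound_general by blast
    also have "\<dots> \<le> vec.dim (UNIV :: (complex^'n) set)" by (rule vec.dim_subset) simp
    also have "\<dots> = CARD('n)" by (simp add: card_cart_basis)
    finally show False using ind[of "Suc CARD('n)"] by simp
  qed
  then obtain m where m: "?g m \<in> vec.span (?g ` {..<m})" by blast
  then obtain c where c: "?g m = (\<Sum>i<m. c i *s ?g i)" using span_coeffs by blast
  define p where "p = monom 1 m - (\<Sum>i<m. monom (c i) i)"
  have "coeff p m = 1" unfolding p_def by (simp add: coeff_sum)
  then have "p \<noteq> 0" by auto
  moreover have "pA A p x = 0"
    unfolding p_def using c by (simp add: pA_diff pA_sum_poly pA_monom)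
  ultimately show ?thesis by blast
qed



lemma ji_sync: "join_irreducible A S \<Longrightarrow> synchrony A S"
  unfolding join_irreducible_def by blast

lemma sc_single_sub: "synchrony A S \<Longrightarrow> x \<in> S \<Longrightarrow> syn_closure A {x} \<subseteq> S"
  by (rule sc_least) auto

lemma gen_decomp:
  fixes A :: "nat^'n^'n"
  assumes ji: "join_irreducible A S"
  shows "x \<in> S \<Longrightarrow> syn_closure A {x} = S \<Longrightarrow> p \<noteq> 0 \<Longrightarrow> pA A p x = 0 \<Longrightarrow>
         \<exists>y a e. syn_closure A {y} = S \<and> (shiftop A a ^^ e) y = 0"
proof (induction "degree p" arbitrary: p x rule: less_induct)
  case less
  have Ssync: "synchrony A S" using ji by (rule ji_sync)
  show ?case
  proof (cases "degree p = 0")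
    case True
    then have pc: "p = [:coeff p 0:]" using degree_0_id by metis
    then have c0: "coeff p 0 \<noteq> 0" using less.prems(3) by auto
    have "coeff p 0 *s x = 0" using less.prems(4) pc pA_const by metis
    then have "x = 0" using c0 by simp
    then have "(shiftop A 0 ^^ 0) x = 0" by simp
    then show ?thesis using less.prems(2) by blast
  next
    case False
    have "\<not> constant (poly p)" using False constant_degree[of p] by simp
    then obtain a where a: "poly p a = 0"
      using fundamental_theorem_of_algebra[of p] by blast
    define e where "e = order a p"
    define P where "P = [:-a, 1:] ^ e"
    obtain q where q: "p = P * q" "\<not> [:-a, 1:] dvd q"
      using order_decomp[OF less.prems(3), of a] unfolding P_def e_def by blast
    have q0: "q \<noteq> 0" using q less.prems(3) by auto
    have e0: "e \<noteq> 0" using a less.prems(3) order_root unfolding e_def by blast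
    have degP: "degree P = e" unfolding P_def using degree_linear_power[of "-a" e] by simp
    have P0: "P \<noteq> 0" unfolding P_def by simp
    show ?thesis
    proof (cases "degree q = 0")
      case True
      then have qc: "q = [:coeff q 0:]" using degree_0_id by metis
      then have c0: "coeff q 0 \<noteq> 0" using q0 by auto
      have "0 = pA A P (pA A q x)" using less.prems(4) q(1) pA_mult by metis
      also have "\<dots> = coeff q 0 *s pA A P x" using qc pA_const pA_vscale by metis
      finally have "pA A P x = 0" using c0 by simp
      then have "(shiftop A a ^^ e) x = 0" unfolding P_def pA_linpow .
      then show ?thesis using less.prems(2) by blast
    next
      case False
      have pr: "prime_elem [:-a, 1:]" by (rule prime_elem_linear_field_poly) simp
      have "coprime [:-a, 1:] q" using prime_elem_imp_coprime[OF pr q(2)] .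
      then have cop: "coprime P q" unfolding P_def by simp
      define s where "s = fst (bezout_coefficients P q)"
      define t where "t = snd (bezout_coefficients P q)"
      have st: "s * P + t * q = 1"
        using bezout_coefficients_fst_snd[of P q] cop unfolding s_def t_def by simp
      define x1 where "x1 = pA A (s * P) x"
      define y where "y = pA A (t * q) x"
      have xsum: "x = x1 + y"
      proof -
        have "x = pA A (s * P + t * q) x" using st pA_one by metis
        then show ?thesis unfolding x1_def y_def by (simp add: pA_add)
      qed
      have ygen: "pA A P y = 0"
      proof -
        have "pA A P y = pA A (P * (t * q)) x" unfolding y_def by (simp add: pA_mult)
        also have "P * (t * q) = t * p" using q(1) by (simp add: algebra_simps)
        also have "pA A (t * p) x = 0" using less.prems(4) by (simp add: pA_mult)
        finally show ?thesis .
      qed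
      have x1ann: "pA A q x1 = 0"
      proof -
        have "pA A q x1 = pA A (q * (s * P)) x" unfolding x1_def by (simp add: pA_mult)
        also have "q * (s * P) = s * p" using q(1) by (simp add: algebra_simps)
        also have "pA A (s * p) x = 0" using less.prems(4) by (simp add: pA_mult)
        finally show ?thesis .
      qed
      have x1S: "x1 \<in> S" unfolding x1_def using sync_pA[OF Ssync less.prems(1)] .
      have yS: "y \<in> S" unfolding y_def using sync_pA[OF Ssync less.prems(1)] .
      have s1: "syn_closure A {x1} \<subseteq> S" using sc_single_sub[OF Ssync x1S] .
      have s2: "syn_closure A {y} \<subseteq> S" using sc_single_sub[OF Ssync yS] .
      have join: "S = syn_join A (syn_closure A {x1}) (syn_closure A {y})"
      proof
        have "x \<in> syn_join A (syn_closure A {x1}) (syn_closure A {y})"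
          unfolding xsum by (rule join_mem) (auto intro: sc_sup[THEN subsetD])
        then have "syn_closure A {x} \<subseteq> syn_join A (syn_closure A {x1}) (syn_closure A {y})"
          using sc_least[OF join_sync] by blast
        then show "S \<subseteq> syn_join A (syn_closure A {x1}) (syn_closure A {y})" using less.prems(2) by simp
        show "syn_join A (syn_closure A {x1}) (syn_closure A {y}) \<subseteq> S"
          by (rule join_sub[OF Ssync s1 s2])
      qed
      have "syn_closure A {x1} = S \<or> syn_closure A {y} = S"
        using ji_split[OF ji sc_sync sc_sync join] .
      then show ?thesis
      proof
        assume y1: "syn_closure A {y} = S"
        have "(shiftop A a ^^ e) y = 0" using ygen unfolding P_def pA_linpow .
        then show ?thesis using y1 by blast
      next
        assume x1: "syn_closure A {x1} = S"
        have "degree p = degree P + degree q" using q(1) P0 q0 degree_mult_eq by metis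
        then have "degree q < degree p" using degP e0 by simp
        from less.hyps[OF this x1S x1 q0 x1ann] show ?thesis .
      qed
    qed
  qed
qed

lemma ji_finite:
  fixes A :: "nat^'n^'n"
  assumes reg: "regular_network A v" and ji: "join_irreducible A S" and nf: "S \<noteq> full_sync"
  shows "finite B \<Longrightarrow> syn_closure A B = S \<Longrightarrow> \<exists>b\<in>B. syn_closure A {b} = S"
proof (induction B rule: finite_induct)
  case empty
  then show ?case using sc_empty[OF reg] nf by simp
next
  case (insert b B)
  have eq: "syn_closure A (insert b B) = syn_join A (syn_closure A {b}) (syn_closure A B)"
  proof
    have "insert b B \<subseteq> syn_join A (syn_closure A {b}) (syn_closure A B)"
    proof
      fix z assume "z \<in> insert b B"
      then show "z \<in> syn_join A (syn_closure A {b}) (syn_closure A B)"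
      proof
        assume "z = b"
        have "b + 0 \<in> syn_join A (syn_closure A {b}) (syn_closure A B)"
          by (rule join_mem) (auto intro: sc_sup[THEN subsetD] vec.subspace_0[OF sc_subspace])
        then show ?thesis using \<open>z = b\<close> by simp
      next
        assume "z \<in> B"
        have "0 + z \<in> syn_join A (syn_closure A {b}) (syn_closure A B)"
          by (rule join_mem) (auto intro: sc_sup[THEN subsetD] vec.subspace_0[OF sc_subspace] \<open>z \<in> B\<close>)
        then show ?thesis by simp
      qed
    qed
    then show "syn_closure A (insert b B) \<subseteq> syn_join A (syn_closure A {b}) (syn_closure A B)"
      using sc_least[OF join_sync] by blast
    show "syn_join A (syn_closure A {b}) (syn_closure A B) \<subseteq> syn_closure A (insert b B)"
      by (rule join_sub[OF sc_sync]) (rule sc_mono, blast)+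
  qed
  have "syn_closure A {b} = S \<or> syn_closure A B = S"
    using ji_split[OF ji sc_sync sc_sync] eq insert.prems by simp
  then show ?case using insert.IH by blast
qed

lemma exists_generator:
  fixes A :: "nat^'n^'n"
  assumes reg: "regular_network A v" and ji: "join_irreducible A S"
  shows "\<exists>l W. jordan_subspace A l W \<and> syn_closure A W = S"
proof (cases "S = full_sync")
  case True
  have ch: "jordan_chain A (of_nat v) [one]"
    unfolding jordan_chain_def shiftop_def using A_one[OF reg, of 1] one_nz by simp
  have "set [one] \<subseteq> gen_eigenspace A (of_nat v)"
    unfolding gen_eigenspace_def using ch unfolding jordan_chain_def
    by (auto intro!: exI[of _ 1])
  then have js: "jordan_subspace A (of_nat v) (vec.span {one})"
    unfolding jordan_subspace_def using ch chain_eigenvalue by fastforce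
  have onef: "one \<in> full_sync" using full_sync_eq by (metis vector_smult_lid)
  have "vec.span {one} \<subseteq> full_sync"
    using onef polydiag_subspace[OF polydiag_full] vec.span_minimal by blast
  then have "syn_closure A (vec.span {one}) \<subseteq> full_sync" using sc_least[OF sync_full[OF reg]] by blast
  then have "syn_closure A (vec.span {one}) = S" using full_sub_sc True by blast
  then show ?thesis using js by blast
next
  case False
  have Ssync: "synchrony A S" using ji by (rule ji_sync)
  obtain B where B: "B \<subseteq> S" "vec.independent B" "S \<subseteq> vec.span B" "card B = vec.dim S"
    by (rule vec.basis_exists)
  have fB: "finite B" using B(2) by (rule vec.finiteI_independent)
  have "syn_closure A B = S"
  proof
    show "syn_closure A B \<subseteq> S" using sc_least[OF Ssync B(1)] .
    have "vec.span B \<subseteq> syn_closure A B" using sc_sup sc_subspace vec.span_minimal by blast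
    then show "S \<subseteq> syn_closure A B" using B(3) by blast
  qed
  then obtain b where b: "b \<in> B" "syn_closure A {b} = S" using ji_finite[OF reg ji False fB] by blast
  obtain p where p: "p \<noteq> 0" "pA A p b = 0" using annihilator by blast
  obtain y a e where y: "syn_closure A {y} = S" "(shiftop A a ^^ e) y = 0"
    using gen_decomp[OF ji _ b(2) p] b(1) B(1) by blast
  have "y \<noteq> 0" using y(1) sc_zero[OF reg] False by auto
  then obtain W where "jordan_subspace A a W" "syn_closure A W = syn_closure A {y}"
    using gen_generator[OF _ y(2)] by blast
  then show ?thesis using y(1) by auto
qed



lemma no_jordan_v:
  fixes A :: "nat^'n^'n"
  assumes reg: "regular_network A v" and eq: "shiftop A (of_nat v) y = c *s one"
  shows "c = 0"
proof (rule ccontr)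
  assume c: "c \<noteq> 0"
  define z where "z = (1/c) *s y"
  have ez: "shiftop A (of_nat v) z = one"
    unfolding z_def shift_scale eq using c by simp
  define w where "w i = Re (z $ i)" for i
  have fin: "finite (range w)" by simp
  have "Max (range w) \<in> range w" using Max_in[OF fin] by simp
  then obtain i0 where i0: "w i0 = Max (range w)" by (metis imageE)
  have wmax: "w j \<le> w i0" for j using i0 fin by simp
  have comp: "(cmat A *v z) $ i0 - of_nat v * z $ i0 = 1"
    using ez unfolding shiftop_def one_def by (simp add: vec_eq_iff)
  have "(cmat A *v z) $ i0 = (\<Sum>j\<in>UNIV. of_nat (A$i0$j) * z $ j)"
    unfolding cmat_def matrix_vector_mult_def by simp
  then have "Re ((cmat A *v z) $ i0) = (\<Sum>j\<in>UNIV. real (A$i0$j) * w j)"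
    unfolding w_def by (simp add: Re_sum)
  also have "\<dots> \<le> (\<Sum>j\<in>UNIV. real (A$i0$j) * w i0)"
    by (rule sum_mono) (simp add: mult_left_mono wmax)
  also have "\<dots> = real (\<Sum>j\<in>UNIV. A$i0$j) * w i0"
    by (simp add: sum_distrib_right)
  also have "(\<Sum>j\<in>UNIV. A$i0$j) = v" using reg unfolding regular_network_def by blast
  finally have le: "Re ((cmat A *v z) $ i0) \<le> real v * w i0" .
  have "Re ((cmat A *v z) $ i0) - real v * w i0 = 1"
    using arg_cong[OF comp, of Re] unfolding w_def by simp
  then show False using le by simp
qed

lemma span_inv:
  assumes x: "x \<in> vec.span X" and sub: "vec.subspace U"
    and lin_add: "\<And>a b. g (a + b) = g a + g b" and lin_sc: "\<And>c a. g (c *s a) = c *s g a"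
    and base: "\<And>a. a \<in> X \<Longrightarrow> g a \<in> U"
  shows "g x \<in> U"
proof -
  have g0: "g 0 = 0" using lin_sc[of 0 0] by simp
  have "vec.subspace {a. g a \<in> U}"
    unfolding vec.subspace_def
    using sub lin_add lin_sc g0 vec.subspace_0 vec.subspace_add vec.subspace_scale by auto
  then show ?thesis using vec.span_induct[OF x, of "\<lambda>a. g a \<in> U"] base by auto
qed

lemma special_exists:
  fixes A :: "nat^'n^'n"
  assumes reg: "regular_network A v" and ji: "join_irreducible A S"
  shows "\<exists>W. special_jordan A W \<and> S = syn_closure A W"
proof -
  have Ssync: "synchrony A S" using ji by (rule ji_sync)
  have Spoly: "polydiagonal S" using Ssync unfolding synchrony_def by blast
  define Pn where "Pn n \<longleftrightarrow> (\<exists>l W. jordan_subspace A l W \<and> syn_closure A W = S \<and> vec.dim (Pdiag W) = n)" for n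
  obtain l0 W0 where "jordan_subspace A l0 W0" "syn_closure A W0 = S"
    using exists_generator[OF reg ji] by blast
  then have "Pn (vec.dim (Pdiag W0))" unfolding Pn_def by blast
  then have "Pn (LEAST n. Pn n)" by (rule LeastI)
  then obtain l W where js: "jordan_subspace A l W" and scW: "syn_closure A W = S"
    and dW: "vec.dim (Pdiag W) = (LEAST n. Pn n)" unfolding Pn_def by blast
  have minim: "\<not> Pdiag W' \<subset> Pdiag W" if "jordan_subspace A l' W'" "syn_closure A W' = S" for l' W'
  proof
    assume "Pdiag W' \<subset> Pdiag W"
    then have "vec.dim (Pdiag W') < (LEAST n. Pn n)" using Pdiag_dim_less dW by metis
    moreover have "Pn (vec.dim (Pdiag W'))" unfolding Pn_def using that by blast
    ultimately show False using not_less_Least by blast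
  qed
  obtain xs where xs: "jordan_chain A l xs" "set xs \<subseteq> gen_eigenspace A l" "W = vec.span (set xs)"
    using js unfolding jordan_subspace_def by blast
  have "special_jordan A W"
    unfolding special_jordan_def
  proof (intro exI conjI allI impI)
    show "jordan_subspace A l W" by (rule js)
    fix U assume U: "jordan_subspace A l U \<and> vec.dim U = vec.dim W \<and> Pdiag U \<subseteq> Pdiag W"
    show "Pdiag U = Pdiag W \<or> U = full_sync"
    proof (rule ccontr)
      assume neg: "\<not> (Pdiag U = Pdiag W \<or> U = full_sync)"
      then have psub: "Pdiag U \<subset> Pdiag W" and nf: "U \<noteq> full_sync" using U by auto
      obtain ys where ys: "jordan_chain A l ys" "set ys \<subseteq> gen_eigenspace A l" "U = vec.span (set ys)"
        using U unfolding jordan_subspace_def by blast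
      let ?f = "shiftop A l"
      define k where "k = length xs"
      have k0: "0 < k" unfolding k_def using chain_ne[OF xs(1)] .
      have lenys: "length ys = k"
        using chain_dim[OF xs(1)] chain_dim[OF ys(1)] U xs(3) ys(3) unfolding k_def by simp
      have scU: "syn_closure A U \<noteq> S" using minim[of l U] U psub by blast
      have PW_S: "Pdiag W \<subseteq> S" using Pdiag_least[OF Spoly] sc_sup scW by blast
      have U_PW: "U \<subseteq> Pdiag W" using Pdiag_sup U by blast
      have Usub: "vec.subspace U" using ys(3) by simp
      have Wsub: "vec.subspace W" using xs(3) by simp
      have PWsub: "vec.subspace (Pdiag W)" by (rule Pdiag_subspace)
      define t where "t = xs!(k-1)"
      have ft: "(?f ^^ m) t = (if m \<le> k-1 then xs!(k-1-m) else 0)" for m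
        unfolding t_def using chain_nth[OF xs(1), of "k-1" m] k0 unfolding k_def by simp
      have xsW: "xs!i \<in> W" if "i < k" for i
        using that xs(3) vec.span_base unfolding k_def by (metis nth_mem)
      have ysU: "ys!i \<in> U" if "i < k" for i
        using that ys(3) vec.span_base lenys by (metis nth_mem)
      have fW: "(?f ^^ m) t \<in> W" for m
      proof (cases "m \<le> k-1")
        case True
        then have "k-1-m < k" using k0 by simp
        then show ?thesis using ft[of m] True xsW by simp
      next
        case False
        then show ?thesis using ft[of m] vec.subspace_0[OF Wsub] by simp
      qed
      have tW: "t \<in> W" using fW[of 0] by simp
      have U_inv: "?f u \<in> U" if "u \<in> U" for u
      proof -
        have "u \<in> vec.span (set ys)" using that ys(3) by simp
        then show ?thesis
        proof (rule span_inv[OF _ Usub shift_add shift_scale])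
          fix a assume "a \<in> set ys"
          then obtain i where i: "i < k" "a = ys!i" using lenys by (auto simp: in_set_conv_nth)
          have "?f (ys!i) = (?f ^^ 1) (ys!i)" by simp
          also have "\<dots> = (if 1 \<le> i then ys!(i-1) else 0)" using chain_nth[OF ys(1), of i 1] i lenys by simp
          finally show "?f a \<in> U" using i ysU vec.subspace_0[OF Usub] by (cases "1 \<le> i") auto
        qed
      qed
      have U_pow: "(?f ^^ m) u \<in> U" if "u \<in> U" for u m
        using that by (induction m) (auto intro: U_inv)
      have U_kill: "(?f ^^ k) u = 0" if "u \<in> U" for u
      proof -
        have "u \<in> vec.span (set ys)" using that ys(3) by simp
        then have "(?f ^^ k) u \<in> {0}"
        proof (rule span_inv[OF _ _ pow_add pow_scale])
          show "vec.subspace {0::complex^'n}" by (simp add: vec.subspace_def)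
          fix a assume "a \<in> set ys"
          then obtain i where i: "i < k" "a = ys!i" using lenys by (auto simp: in_set_conv_nth)
          then show "(?f ^^ k) a \<in> {0}" using chain_nth[OF ys(1), of i k] lenys by simp
        qed
        then show ?thesis by simp
      qed
      have ys0F: "ys!0 \<in> full_sync"
      proof (rule ccontr)
        assume "ys!0 \<notin> full_sync"
        then obtain i j where ij: "(ys!0)$i \<noteq> (ys!0)$j" unfolding full_sync_def by blast
        define phi where "phi x = x$i - x$j" for x :: "complex^'n"
        have phi0: "phi (ys!0) \<noteq> 0" using ij unfolding phi_def by simp
        have phi_diff: "phi (a - b) = phi a - phi b" for a b unfolding phi_def by simp
        have phi_sc: "phi (c *s a) = c * phi a" for c a unfolding phi_def by (simp add: algebra_simps)
        have solve: "\<exists>u\<in>U. \<forall>m. k - jj \<le> m \<longrightarrow> phi ((?f ^^ m) (t - u)) = 0" if "jj \<le> k" for jj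
          using that
        proof (induction jj)
          case 0
          have "phi ((?f ^^ m) (t - 0)) = 0" if "k \<le> m" for m
          proof -
            have "\<not> m \<le> k - 1" using that k0 by linarith
            then have "(?f ^^ m) t = 0" using ft[of m] by simp
            then show ?thesis unfolding phi_def by simp
          qed
          then have "\<forall>m. k - 0 \<le> m \<longrightarrow> phi ((?f ^^ m) (t - 0)) = 0" by simp
          then show ?case using vec.subspace_0[OF Usub] by blast
        next
          case (Suc jj)
          then obtain u where u: "u \<in> U" "\<forall>m. k - jj \<le> m \<longrightarrow> phi ((?f ^^ m) (t - u)) = 0" by auto
          define m0 where "m0 = k - Suc jj"
          have m0k: "m0 < k" unfolding m0_def using Suc.prems by simp
          define c where "c = phi ((?f ^^ m0) (t - u)) / phi (ys!0)"
          define u' where "u' = u + c *s ys!m0"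
          have u'U: "u' \<in> U" unfolding u'_def using u(1) ysU[OF m0k] Usub
            by (simp add: vec.subspace_add vec.subspace_scale)
          have "phi ((?f ^^ m) (t - u')) = 0" if m: "k - Suc jj \<le> m" for m
          proof -
            have e1: "t - u' = (t - u) - c *s ys!m0" unfolding u'_def by (simp add: algebra_simps)
            have e2: "(?f ^^ m) (t - u') = (?f ^^ m) (t - u) - c *s (?f ^^ m) (ys!m0)"
              unfolding e1 pow_diff pow_scale ..
            have cy: "(?f ^^ m) (ys!m0) = (if m \<le> m0 then ys!(m0-m) else 0)"
              using chain_nth[OF ys(1), of m0 m] m0k lenys by simp
            show ?thesis
            proof (cases "m = m0")
              case True
              then have "phi ((?f ^^ m) (t - u')) = phi ((?f ^^ m0) (t - u)) - c * phi (ys!0)"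
                using e2 cy phi_diff phi_sc by simp
              also have "\<dots> = 0" unfolding c_def using phi0 by simp
              finally show ?thesis .
            next
              case False
              then have "m > m0" using m unfolding m0_def by simp
              then have "k - jj \<le> m" unfolding m0_def using Suc.prems by simp
              then have "phi ((?f ^^ m) (t - u)) = 0" using u(2) by blast
              then show ?thesis using e2 cy \<open>m > m0\<close> phi_diff phi_sc by simp
            qed
          qed
          then show ?case using u'U by blast
        qed
        obtain u where u: "u \<in> U" "\<And>m. phi ((?f ^^ m) (t - u)) = 0"
          using solve[of k] by auto
        define z where "z = t - u"
        show False
        proof (cases "z = 0")
          case True
          then have tU: "t \<in> U" using u(1) unfolding z_def by simp
          have "W \<subseteq> U"
          proof -
            have "set xs \<subseteq> U"
            proof
              fix a assume "a \<in> set xs"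
              then obtain i where i: "i < k" "a = xs!i" unfolding k_def by (auto simp: in_set_conv_nth)
              have "(?f ^^ (k-1-i)) t = xs!i" using ft[of "k-1-i"] i by simp
              then show "a \<in> U" using U_pow[OF tU] i by metis
            qed
            then show ?thesis using xs(3) vec.span_minimal Usub by blast
          qed
          then have "Pdiag W \<subseteq> Pdiag U" using Pdiag_least[OF Pdiag_poly] Pdiag_sup by blast
          then show False using psub by blast
        next
          case False
          have zk: "(?f ^^ k) z = 0" unfolding z_def pow_diff using ft[of k] U_kill[OF u(1)] k0 by simp
          obtain zs where zs: "jordan_chain A l zs" "set zs \<subseteq> gen_eigenspace A l" "z \<in> set zs"
            "\<forall>w\<in>set zs. \<exists>m. w = (?f ^^ m) z"
            using chain_from_gen[OF False zk] by blast
          define Z where "Z = vec.span (set zs)"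
          have jZ: "jordan_subspace A l Z"
            unfolding jordan_subspace_def Z_def using zs chain_eigenvalue by blast
          define Q where "Q = Pdiag W \<inter> {x. x$i = x$j}"
          have Qpoly: "polydiagonal Q" unfolding Q_def by (rule polydiag_Int[OF Pdiag_poly polydiag_pair])
          have Qsub: "vec.subspace Q" using Qpoly by (rule polydiag_subspace)
          have fzQ: "(?f ^^ m) z \<in> Q" for m
          proof -
            have "(?f ^^ m) z = (?f ^^ m) t - (?f ^^ m) u" unfolding z_def pow_diff ..
            moreover have "(?f ^^ m) t \<in> Pdiag W" using fW Pdiag_sup by blast
            moreover have "(?f ^^ m) u \<in> Pdiag W" using U_pow[OF u(1)] U_PW by blast
            ultimately have "(?f ^^ m) z \<in> Pdiag W" using vec.subspace_diff[OF PWsub] by simp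
            moreover have "phi ((?f ^^ m) z) = 0" using u(2) unfolding z_def .
            ultimately show ?thesis unfolding Q_def phi_def by simp
          qed
          have "set zs \<subseteq> Q"
          proof
            fix w assume "w \<in> set zs"
            then obtain m where "w = (?f ^^ m) z" using zs(4) by blast
            then show "w \<in> Q" using fzQ by simp
          qed
          then have ZQ: "Z \<subseteq> Q" unfolding Z_def using vec.span_minimal[OF _ Qsub] by blast
          have PZQ: "Pdiag Z \<subseteq> Q" using Pdiag_least[OF Qpoly ZQ] .
          have y0: "ys!0 \<in> Pdiag W" using ysU[OF k0] U_PW by blast
          have y0Q: "ys!0 \<notin> Q" unfolding Q_def using ij by simp
          have PZ: "Pdiag Z \<subset> Pdiag W" using PZQ y0 y0Q unfolding Q_def by blast
          have "syn_closure A Z = S"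
          proof -
            have ZS: "Z \<subseteq> S" using ZQ PW_S unfolding Q_def by blast
            have s1: "syn_closure A Z \<subseteq> S" using sc_least[OF Ssync ZS] .
            have s2: "syn_closure A U \<subseteq> S" using sc_least[OF Ssync] U_PW PW_S by blast
            let ?J = "syn_join A (syn_closure A Z) (syn_closure A U)"
            have "t \<in> ?J"
            proof -
              have "z + u \<in> ?J"
                by (rule join_mem) (use zs(3) u(1) vec.span_base sc_sup Z_def in blast)+
              then show ?thesis unfolding z_def by simp
            qed
            then have "W \<subseteq> ?J"
            proof -
              assume tJ: "t \<in> ?J"
              have "set xs \<subseteq> ?J"
              proof
                fix a assume "a \<in> set xs"
                then obtain i where i: "i < k" "a = xs!i" unfolding k_def by (auto simp: in_set_conv_nth)
                have "(?f ^^ (k-1-i)) t = xs!i" using ft[of "k-1-i"] i by simp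
                then show "a \<in> ?J" using sync_pow[OF join_sync tJ] i by metis
              qed
              then show ?thesis using xs(3) vec.span_minimal sync_subspace[OF join_sync] by blast
            qed
            then have "S \<subseteq> ?J" using sc_least[OF join_sync] scW by blast
            then have "S = ?J" using join_sub[OF Ssync s1 s2] by blast
            then have "syn_closure A Z = S \<or> syn_closure A U = S"
              using ji_split[OF ji sc_sync sc_sync] by blast
            then show ?thesis using scU by blast
          qed
          then show False using minim[OF jZ] PZ by blast
        qed
      qed
      obtain c where c: "ys!0 = c *s one" using ys0F full_sync_eq by blast
      have c0: "c \<noteq> 0" using chain_nz[OF ys(1), of 0] lenys k0 c by auto
      have "?f (ys!0) = 0" using ys(1) unfolding jordan_chain_def by blast
      then have "((of_nat v - l) * c) *s (one::complex^'n) = 0"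
        unfolding c shiftop_def A_one[OF reg] by (simp add: algebra_simps)
      moreover have "(one::complex^'n) \<noteq> 0" by (rule one_nz)
      ultimately have lv: "l = of_nat v" using c0 by auto
      have k1: "k = 1"
      proof (rule ccontr)
        assume "k \<noteq> 1"
        then have "1 < length ys" using lenys k0 by simp
        then have "?f (ys!1) = ys!0" using ys(1) unfolding jordan_chain_def by auto
        then have "shiftop A (of_nat v) (ys!1) = c *s one" using lv c by simp
        then show False using no_jordan_v[OF reg] c0 by blast
      qed
      have "set ys = {c *s one}" using lenys k1 c
        by (metis One_nat_def length_0_conv length_Suc_conv list.set(1) list.set(2) nth_Cons_0)
      then have Ueq: "U = vec.span {c *s one}" using ys(3) by simp
      have "U = full_sync"
      proof
        have "c *s one \<in> full_sync" using full_sync_eq by blast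
        then show "U \<subseteq> full_sync" unfolding Ueq
          using vec.span_minimal polydiag_subspace[OF polydiag_full] by blast
        show "full_sync \<subseteq> U"
        proof
          fix x :: "complex^'n" assume "x \<in> full_sync"
          then obtain d where d: "x = d *s one" using full_sync_eq by blast
          have "x = (d / c) *s (c *s one)" using d c0 by simp
          then show "x \<in> U" unfolding Ueq by (metis vec.span_base vec.span_scale singletonI)
        qed
      qed
      then show False using nf by blast
    qed
  qed
  then show ?thesis using scW by blast
qed

theorem mainTheorem10:
  fixes A :: "nat^'n^'n" and v :: nat
  assumes "regular_network A v"
  shows "(\<forall>S. join_irreducible A S \<longrightarrow> (\<exists>W. special_jordan A W \<and> S = syn_closure A W))
       \<and> (\<exists>f. inj_on f {S. join_irreducible A S} \<and> f ` {S. join_irreducible A S} \<subseteq> {W. special_jordan A W})"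
proof
  show p1: "\<forall>S. join_irreducible A S \<longrightarrow> (\<exists>W. special_jordan A W \<and> S = syn_closure A W)"
    using special_exists[OF assms] by blast
  define f where "f S = (SOME W. special_jordan A W \<and> S = syn_closure A W)" for S
  have fS: "special_jordan A (f S) \<and> S = syn_closure A (f S)" if "join_irreducible A S" for S
    unfolding f_def using p1 that by (metis (mono_tags, lifting) someI_ex)
  have "inj_on f {S. join_irreducible A S}"
    by (rule inj_onI) (metis fS mem_Collect_eq)
  moreover have "f ` {S. join_irreducible A S} \<subseteq> {W. special_jordan A W}"
    using fS by blast
  ultimately show "\<exists>f. inj_on f {S. join_irreducible A S} \<and> f ` {S. join_irreducible A S} \<subseteq> {W. special_jordan A W}"
    by blast
qed

end
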